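(* Let $(V,q)$ be a Minkowski space whose dimension is greater than $3$. Let $a,b,c$ be pairwise non-collinear vectors in $\mathcal{C}(0)$. Then there exists $d\in V\setminus\mathcal{C}(0)$ such that $q(d-a)=q(d-b)=q(d-c)=0$.
   Context: A Minkowski space is a pair $(V,q)$ where $V$ is a finite-dimensional real vector space of dimension $n>1$ and $q$ is a quadratic form on $V$ of signature $(1,n-1)$. $\mathcal{C}(0)=\{m\in V: q(m)=0\}$. *)

theory Defs
  imports "HOL-Analysis.Analysis"
begin

definition quadratic_form :: "('a::real_vector \<Rightarrow> real) \<Rightarrow> bool" where
  "quadratic_form q \<longleftrightarrow>
     (\<exists>B :: 'a \<Rightarrow> 'a \<Rightarrow> real. bilinear B \<and> (\<forall>x y. B x y = B y x) \<and> (\<forall>x. q x = B x x))"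

definition signature_1_nm1 :: "('a::euclidean_space \<Rightarrow> real) \<Rightarrow> bool" where
  "signature_1_nm1 q \<longleftrightarrow>
     (\<exists>e :: nat \<Rightarrow> 'a.
        inj_on e {..<DIM('a)} \<and> independent (e ` {..<DIM('a)}) \<and>
        span (e ` {..<DIM('a)}) = UNIV \<and>
        (\<forall>x :: nat \<Rightarrow> real.
           q (\<Sum>i<DIM('a). x i *\<^sub>R e i) = (x 0)\<^sup>2 - (\<Sum>i\<in>{1..<DIM('a)}. (x i)\<^sup>2)))"

definition minkowski_space :: "('a::euclidean_space \<Rightarrow> real) \<Rightarrow> bool" where
  "minkowski_space q \<longleftrightarrow> DIM('a) > 1 \<and> quadratic_form q \<and> signature_1_nm1 q"

definition light_cone :: "('a::real_vector \<Rightarrow> real) \<Rightarrow> 'a set" where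
  "light_cone q = {m. q m = 0}"

end

theory Submission
  imports Defs
begin

lemma lin_noninj:
  fixes f :: "'a::euclidean_space \<Rightarrow> 'b::euclidean_space"
  assumes "linear f" "DIM('b) < DIM('a)"
  shows "\<exists>w. w \<noteq> 0 \<and> f w = 0"
proof (rule ccontr)
  assume "\<not> ?thesis"
  hence "inj f" using assms(1) by (metis linear_injective_0)
  hence "dim (f ` UNIV) = dim (UNIV :: 'a set)"
    using assms(1) by (intro dim_image_eq) (auto simp: inj_on_def inj_def)
  moreover have "dim (f ` UNIV) \<le> DIM('b)" by (metis dim_subset_UNIV)
  ultimately show False using assms(2) by simp
qed

locale mk =
  fixes q :: "'a::real_vector \<Rightarrow> real" and B :: "'a \<Rightarrow> 'a \<Rightarrow> real"
    and e :: "nat \<Rightarrow> 'a" and n :: nat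
  assumes bil: "bilinear B" and sym: "\<And>x y. B x y = B y x" and qB: "\<And>x. q x = B x x"
    and n1: "n \<ge> 1"
    and qc: "\<And>x. q (\<Sum>i<n. x i *\<^sub>R e i) = (x 0)\<^sup>2 - (\<Sum>i\<in>{1..<n}. (x i)\<^sup>2)"
    and surjv: "\<And>v. \<exists>x. v = (\<Sum>i<n. x i *\<^sub>R e i)"
begin

lemma Bladd: "B (x + y) z = B x z + B y z" using bil by (rule bilinear_ladd)
lemma Bradd: "B z (x + y) = B z x + B z y" using bil by (rule bilinear_radd)
lemma Blsub: "B (x - y) z = B x z - B y z" using bil by (rule bilinear_lsub)
lemma Brsub: "B z (x - y) = B z x - B z y" using bil by (rule bilinear_rsub)
lemma Blmul: "B (c *\<^sub>R x) y = c * B x y" using bilinear_lmul[OF bil] by simp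
lemma Brmul: "B x (c *\<^sub>R y) = c * B x y" using bilinear_rmul[OF bil] by simp

lemma q_add: "q (x + y) = q x + 2 * B x y + q y"
  using qB Bladd Bradd sym by (simp add: algebra_simps)
lemma q_diff: "q (x - y) = q x - 2 * B x y + q y"
  using sym[of y x] by (simp add: qB Blsub Brsub algebra_simps)
lemma q_scale: "q (c *\<^sub>R x) = c\<^sup>2 * q x"
  using qB Blmul Brmul by (simp add: power2_eq_square)

lemma null_orth_collinear:
  assumes "q u = 0" "q v = 0" "B u v = 0"
  shows "collinear {0, u, v}"
proof -
  obtain x where u: "u = (\<Sum>i<n. x i *\<^sub>R e i)" using surjv by blast
  obtain y where v: "v = (\<Sum>i<n. y i *\<^sub>R e i)" using surjv by blast
  define z where "z = (\<lambda>i. y 0 * x i - x 0 * y i)"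
  have vz: "(\<Sum>i<n. z i *\<^sub>R e i) = y 0 *\<^sub>R u - x 0 *\<^sub>R v"
    unfolding u v z_def by (simp add: scaleR_diff_left sum_subtractf scaleR_sum_right)
  have "q (y 0 *\<^sub>R u - x 0 *\<^sub>R v) = 0"
    using assms by (simp add: q_diff q_scale Blmul Brmul)
  hence "(z 0)\<^sup>2 - (\<Sum>i\<in>{1..<n}. (z i)\<^sup>2) = 0" using qc[of z] vz by simp
  moreover have "z 0 = 0" by (simp add: z_def)
  ultimately have "(\<Sum>i\<in>{1..<n}. (z i)\<^sup>2) = 0" by simp
  hence "\<forall>i\<in>{1..<n}. (z i)\<^sup>2 = 0" by (subst (asm) sum_nonneg_eq_0_iff) auto
  hence zi: "\<forall>i<n. z i = 0" using \<open>z 0 = 0\<close> by (metis atLeastLessThan_iff less_one not_less power_eq_0_iff zero_neq_numeral)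
  hence "(\<Sum>i<n. z i *\<^sub>R e i) = 0" by simp
  hence eq: "y 0 *\<^sub>R u = x 0 *\<^sub>R v" using vz by simp
  show ?thesis
  proof (cases "x 0 = 0")
    case True
    have "(x 0)\<^sup>2 - (\<Sum>i\<in>{1..<n}. (x i)\<^sup>2) = 0" using qc[of x] u assms(1) by simp
    hence "(\<Sum>i\<in>{1..<n}. (x i)\<^sup>2) = 0" using True by simp
    hence "\<forall>i\<in>{1..<n}. (x i)\<^sup>2 = 0" by (subst (asm) sum_nonneg_eq_0_iff) auto
    hence "\<forall>i<n. x i = 0" using True by (metis atLeastLessThan_iff less_one not_less power_eq_0_iff zero_neq_numeral)
    hence "u = 0" using u by simp
    thus ?thesis by (simp add: collinear_lemma)
  next
    case False
    have "v = (y 0 / x 0) *\<^sub>R u" using eq False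
      by (metis (no_types, lifting) divide_inverse_commute scaleR_scaleR
          inverse_eq_divide right_inverse scaleR_one mult.commute)
    thus ?thesis by (auto simp: collinear_lemma)
  qed
qed

end

theorem lemma2p4:
  fixes q :: "'a::euclidean_space \<Rightarrow> real" and a b c :: 'a
  assumes "minkowski_space q"
    and "DIM('a) > 3"
    and "a \<in> light_cone q" and "b \<in> light_cone q" and "c \<in> light_cone q"
    and "\<not> collinear {0, a, b}" and "\<not> collinear {0, a, c}" and "\<not> collinear {0, b, c}"
  shows "\<exists>d. d \<notin> light_cone q \<and> q (d - a) = 0 \<and> q (d - b) = 0 \<and> q (d - c) = 0"
proof -
  let ?n = "DIM('a)"
  obtain B where bil: "bilinear B" and sym: "\<And>x y. B x y = B y x" and qB: "\<And>x. q x = B x x"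
    using assms(1) unfolding minkowski_space_def quadratic_form_def by blast
  obtain e :: "nat \<Rightarrow> 'a" where inj: "inj_on e {..<?n}" and sp: "span (e ` {..<?n}) = UNIV"
    and qc: "\<And>x. q (\<Sum>i<?n. x i *\<^sub>R e i) = (x 0)\<^sup>2 - (\<Sum>i\<in>{1..<?n}. (x i)\<^sup>2)"
    using assms(1) unfolding minkowski_space_def signature_1_nm1_def by blast
  have surjv: "\<exists>x. v = (\<Sum>i<?n. x i *\<^sub>R e i)" for v
  proof -
    have "v \<in> span (e ` {..<?n})" using sp by simp
    then obtain u where "v = (\<Sum>w\<in>e ` {..<?n}. u w *\<^sub>R w)"
      using span_finite[of "e ` {..<?n}"] by auto
    also have "\<dots> = (\<Sum>i<?n. u (e i) *\<^sub>R e i)" using inj by (simp add: sum.reindex)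
    finally have "v = (\<Sum>i<?n. u (e i) *\<^sub>R e i)" .
    then show ?thesis by (rule exI[where x="\<lambda>i. u (e i)"])
  qed
  interpret mk q B e ?n
    by unfold_locales (use bil sym qB qc surjv DIM_positive in auto)
  have qa: "q a = 0" and qb: "q b = 0" and qcc: "q c = 0"
    using assms(3-5) by (auto simp: light_cone_def)
  define p where "p = B a b"
  define r where "r = B a c"
  define s where "s = B b c"
  have p0: "p \<noteq> 0" using null_orth_collinear[OF qa qb] assms(6) unfolding p_def by blast
  have r0: "r \<noteq> 0" using null_orth_collinear[OF qa qcc] assms(7) unfolding r_def by blast
  have s0: "s \<noteq> 0" using null_orth_collinear[OF qb qcc] assms(8) unfolding s_def by blast
  define \<alpha> where "\<alpha> = (p + r - s) / (2 * p * r)"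
  define \<beta> where "\<beta> = (p + s - r) / (2 * p * s)"
  define \<gamma> where "\<gamma> = (r + s - p) / (2 * r * s)"
  define d0 where "d0 = \<alpha> *\<^sub>R a + \<beta> *\<^sub>R b + \<gamma> *\<^sub>R c"
  have Bd0: "B d0 x = \<alpha> * B a x + \<beta> * B b x + \<gamma> * B c x" for x
    unfolding d0_def by (simp add: Bladd Blmul)
  have aa: "B a a = 0" "B b b = 0" "B c c = 0" using qa qb qcc qB by auto
  have ba: "B b a = p" "B c a = r" "B c b = s" using sym p_def r_def s_def by auto
  have d0a: "B d0 a = 1" using p0 r0 s0 unfolding Bd0 aa ba \<alpha>_def \<beta>_def \<gamma>_def
    by (simp add: field_simps)
  have d0b: "B d0 b = 1" using p0 r0 s0 unfolding Bd0 aa ba \<alpha>_def \<beta>_def \<gamma>_def p_def[symmetric] s_def[symmetric]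
    by (simp add: field_simps)
  have d0c: "B d0 c = 1" using p0 r0 s0 unfolding Bd0 aa ba \<alpha>_def \<beta>_def \<gamma>_def r_def[symmetric] s_def[symmetric]
    by (simp add: field_simps)
  have lin: "linear (\<lambda>w. (B w a, B w b, B w c))"
    by (rule linearI) (simp_all add: Bladd Blmul)
  obtain w where w0: "w \<noteq> 0" and wo: "(B w a, B w b, B w c) = (0, 0, 0)"
    using lin_noninj[OF lin] assms(2) by (auto simp: zero_prod_def)
  have wa: "B w a = 0" and wb: "B w b = 0" and wc: "B w c = 0" using wo by auto
  have qw: "q w \<noteq> 0"
  proof
    assume "q w = 0"
    hence "collinear {0, w, a}" using null_orth_collinear qa wa by blast
    moreover have "a \<noteq> 0" using assms(6) by (auto simp: collinear_lemma)
    ultimately obtain k where "a = k *\<^sub>R w" using w0 by (auto simp: collinear_lemma)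
    hence "p = k * B w b" using p_def Blmul by simp
    thus False using wb p0 by simp
  qed
  define d1 where "d1 = (if q d0 \<noteq> 0 then d0 else d0 + w)"
  have d1a: "B d1 a = 1" and d1b: "B d1 b = 1" and d1c: "B d1 c = 1"
    using d0a d0b d0c wa wb wc by (auto simp: d1_def Bladd)
  have Bd0w: "B d0 w = 0" using wa wb wc sym unfolding Bd0 by simp
  have qd1: "q d1 \<noteq> 0"
    using qw Bd0w by (auto simp: d1_def q_add)
  define d where "d = (2 / q d1) *\<^sub>R d1"
  have qd: "q d = 4 / q d1" using qd1 by (simp add: d_def q_scale power2_eq_square)
  have gen: "q (d - x) = 0" if "B d1 x = 1" "q x = 0" for x
  proof -
    have "B d x = 2 / q d1" using that by (simp add: d_def Blmul)
    thus ?thesis using that qd1 by (simp add: q_diff qd)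
  qed
  show ?thesis
    using gen[OF d1a qa] gen[OF d1b qb] gen[OF d1c qcc] qd qd1
    unfolding light_cone_def by (intro exI[where x=d]) simp
qed

end
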